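(* Let $K\subseteq\mathbb{R}^m$ be closed, $f:\mathbb{R}^n\to\mathbb{R}$, $G:\mathbb{R}^n\to\mathbb{R}^m$, $\Psi=\{x\in\mathbb{R}^n:G(x)\in K\}$ and let $x^*\in\Psi$. Suppose that $f$ is second-order epi-regular at $x^*$ and $G$ is second-order gph-regular at $x^*$. Suppose that MSCQ for $\Psi$ holds at $x^*$ and that $K$ is outer second-order regular at $G(x^* )$ in every direction $G'(x^*;d)\in\mathcal{T}_K(G(x^* ))$. Assume that for every direction $d$ with $G'(x^*;d)\in\mathcal{T}_K(G(x^* ))$ we have $f'(x^*;d)\ge0$, and that for every $d\in\mathcal{C}(x^* )\setminus\{0\}$ the optimization problem $$\min_w\ f''(x^*;d,w)\quad\text{s.t. } G''(x^*;d,w)\in\mathcal{T}^2_K(G(x^* );G'(x^*;d))$$ has a positive optimal objective value, where $\mathcal{C}(x^* ):=\{d\in\mathbb{R}^n: G'(x^*;d)\in\mathcal{T}_K(G(x^* )),\ f'(x^*;d)\le0\}$. Then the second-order growth condition holds at $x^*$ for the problem $\min f(x)$ s.t. $G(x)\in K$, i.e., there exist $c>0$ and a neighborhood $N$ of $x^*$ with $f(x)\ge f(x^* )+c\|x-x^*\|^2$ for all $x\in\Psi\cap N$.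
   Context: Definitions. For $g:\mathbb{R}^n\to\mathbb{R}^k$: $g'(x;d)=\lim_{t\downarrow0}(g(x+td)-g(x))/t$; $g$ is second-order directionally differentiable at $x$ if for every $d$, $g'(x;d)$ exists and $g''(x;d,w):=\lim_{t\downarrow0}\frac{g(x+td+\frac12t^2w)-g(x)-tg'(x;d)}{\frac12t^2}$ exists for all $w$. $g$ is second-order gph-regular (resp. epi-regular, for $k=1$) at $x^*$ if $g$ is locally Lipschitz continuous and second-order directionally differentiable at $x^*$ and for every $d\in\mathbb{R}^n$ and every path $w:\mathbb{R}_+\to\mathbb{R}^n$ with $tw(t)\to0$ as $t\downarrow0$ there is $r$ with $\|r(t)\|/t^2\to0$ as $t\downarrow0$ such that $g(x^*+td+\frac12t^2w(t))=g(x^* )+tg'(x^*;d)+\frac12t^2g''(x^*;d,w(t))+r(t)$ (resp. "$\ge$" instead of "$=$") for $t\ge0$. For a set $C$ and $x^*\in C$: tangent cone $\mathcal{T}_C(x^* )=\{d:\exists t_k\downarrow0,d^k\to d, x^*+t_kd^k\in C\}$; for $d\in\mathcal{T}_C(x^* )$, outer second-order tangent set $\mathcal{T}^2_C(x^*;d)=\{w:\exists t_k\downarrow0,w^k\to w, x^*+t_kd+\frac12t_k^2w^k\in C\}$; $C$ is outer second-order regular at $x^*$ in direction $d$ if for every sequence $x^*+t_kd+\frac12t_k^2w^k\in C$ with $t_k\downarrow0$, $t_kw^k\to0$, one has $\mathrm{dist}(w^k,\mathcal{T}^2_C(x^*;d))\to0$. MSCQ for $\Psi$ holds at $x^*$ if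 there exist a neighborhood $U$ of $x^*$ and $\kappa>0$ with $\mathrm{dist}(x,\Psi)\le\kappa\,\mathrm{dist}(G(x),K)$ for all $x\in U$. The optimal value of a problem is the infimum of its objective over its feasible set. *)

theory Defs
  imports "HOL-Analysis.Analysis"
begin

definition dir_deriv :: "('a::real_normed_vector \<Rightarrow> 'b::real_normed_vector) \<Rightarrow> 'a \<Rightarrow> 'a \<Rightarrow> 'b" where
  "dir_deriv g x d = Lim (at_right 0) (\<lambda>t. (1 / t) *\<^sub>R (g (x + t *\<^sub>R d) - g x))"

definition dir_differentiable :: "('a::real_normed_vector \<Rightarrow> 'b::real_normed_vector) \<Rightarrow> 'a \<Rightarrow> 'a \<Rightarrow> bool" where
  "dir_differentiable g x d \<longleftrightarrow>
     (\<exists>v. ((\<lambda>t. (1 / t) *\<^sub>R (g (x + t *\<^sub>R d) - g x)) \<longlongrightarrow> v) (at_right 0))"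

definition so_quot :: "('a::real_normed_vector \<Rightarrow> 'b::real_normed_vector) \<Rightarrow> 'a \<Rightarrow> 'a \<Rightarrow> 'a \<Rightarrow> real \<Rightarrow> 'b" where
  "so_quot g x d w t = (2 / t\<^sup>2) *\<^sub>R (g (x + t *\<^sub>R d + (t\<^sup>2 / 2) *\<^sub>R w) - g x - t *\<^sub>R dir_deriv g x d)"

definition so_dir_deriv :: "('a::real_normed_vector \<Rightarrow> 'b::real_normed_vector) \<Rightarrow> 'a \<Rightarrow> 'a \<Rightarrow> 'a \<Rightarrow> 'b" where
  "so_dir_deriv g x d w = Lim (at_right 0) (so_quot g x d w)"

definition so_dir_differentiable :: "('a::real_normed_vector \<Rightarrow> 'b::real_normed_vector) \<Rightarrow> 'a \<Rightarrow> bool" where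
  "so_dir_differentiable g x \<longleftrightarrow>
     (\<forall>d. dir_differentiable g x d \<and> (\<forall>w. \<exists>v. (so_quot g x d w \<longlongrightarrow> v) (at_right 0)))"

definition loc_lipschitz_at :: "('a::real_normed_vector \<Rightarrow> 'b::real_normed_vector) \<Rightarrow> 'a \<Rightarrow> bool" where
  "loc_lipschitz_at g x \<longleftrightarrow> (\<exists>e>0. \<exists>L. L-lipschitz_on (ball x e) g)"

definition so_gph_regular :: "('a::real_normed_vector \<Rightarrow> 'b::real_normed_vector) \<Rightarrow> 'a \<Rightarrow> bool" where
  "so_gph_regular g x \<longleftrightarrow> loc_lipschitz_at g x \<and> so_dir_differentiable g x \<and>
     (\<forall>d. \<forall>w :: real \<Rightarrow> 'a. ((\<lambda>t. t *\<^sub>R w t) \<longlongrightarrow> 0) (at_right 0) \<longrightarrow>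
        (\<exists>r :: real \<Rightarrow> 'b. ((\<lambda>t. norm (r t) / t\<^sup>2) \<longlongrightarrow> 0) (at_right 0) \<and>
          (\<forall>t\<ge>0. g (x + t *\<^sub>R d + (t\<^sup>2 / 2) *\<^sub>R w t) =
                   g x + t *\<^sub>R dir_deriv g x d + (t\<^sup>2 / 2) *\<^sub>R so_dir_deriv g x d (w t) + r t)))"

definition so_epi_regular :: "('a::real_normed_vector \<Rightarrow> real) \<Rightarrow> 'a \<Rightarrow> bool" where
  "so_epi_regular g x \<longleftrightarrow> loc_lipschitz_at g x \<and> so_dir_differentiable g x \<and>
     (\<forall>d. \<forall>w :: real \<Rightarrow> 'a. ((\<lambda>t. t *\<^sub>R w t) \<longlongrightarrow> 0) (at_right 0) \<longrightarrow>
        (\<exists>r :: real \<Rightarrow> real. ((\<lambda>t. \<bar>r t\<bar> / t\<^sup>2) \<longlongrightarrow> 0) (at_right 0) \<and>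
          (\<forall>t\<ge>0. g (x + t *\<^sub>R d + (t\<^sup>2 / 2) *\<^sub>R w t) \<ge>
                   g x + t * dir_deriv g x d + (t\<^sup>2 / 2) * so_dir_deriv g x d (w t) + r t)))"

definition tangent_cone :: "'a::real_normed_vector set \<Rightarrow> 'a \<Rightarrow> 'a set" where
  "tangent_cone C x = {d. \<exists>t dk. (\<forall>k. t k > 0) \<and> t \<longlonglongrightarrow> 0 \<and> dk \<longlonglongrightarrow> d \<and>
                          (\<forall>k. x + t k *\<^sub>R dk k \<in> C)}"

definition so_tangent_set :: "'a::real_normed_vector set \<Rightarrow> 'a \<Rightarrow> 'a \<Rightarrow> 'a set" where
  "so_tangent_set C x d = {w. \<exists>t wk. (\<forall>k. t k > 0) \<and> t \<longlonglongrightarrow> 0 \<and> wk \<longlonglongrightarrow> w \<and>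
                          (\<forall>k. x + t k *\<^sub>R d + ((t k)\<^sup>2 / 2) *\<^sub>R wk k \<in> C)}"

text \<open>Outer second-order regularity; distance to the empty set is +infinity, so the
  second-order tangent set is required to be nonempty whenever such a sequence exists.\<close>
definition outer_so_regular :: "'a::real_normed_vector set \<Rightarrow> 'a \<Rightarrow> 'a \<Rightarrow> bool" where
  "outer_so_regular C x d \<longleftrightarrow>
     (\<forall>t wk. (\<forall>k. t k > 0) \<and> t \<longlonglongrightarrow> 0 \<and> (\<lambda>k. t k *\<^sub>R wk k) \<longlonglongrightarrow> 0 \<and>
             (\<forall>k. x + t k *\<^sub>R d + ((t k)\<^sup>2 / 2) *\<^sub>R wk k \<in> C)
        \<longrightarrow> so_tangent_set C x d \<noteq> {} \<and> (\<lambda>k. infdist (wk k) (so_tangent_set C x d)) \<longlonglongrightarrow> 0)"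

definition MSCQ :: "('a::real_normed_vector \<Rightarrow> 'b::real_normed_vector) \<Rightarrow> 'b set \<Rightarrow> 'a \<Rightarrow> bool" where
  "MSCQ G K x \<longleftrightarrow> (\<exists>U \<kappa>. open U \<and> x \<in> U \<and> \<kappa> > 0 \<and>
       (\<forall>y\<in>U. infdist y {z. G z \<in> K} \<le> \<kappa> * infdist (G y) K))"

definition critical_cone :: "('a::real_normed_vector \<Rightarrow> real) \<Rightarrow> ('a \<Rightarrow> 'b::real_normed_vector) \<Rightarrow> 'b set \<Rightarrow> 'a \<Rightarrow> 'a set" where
  "critical_cone f G K x = {d. dir_deriv G x d \<in> tangent_cone K (G x) \<and> dir_deriv f x d \<le> 0}"

end

theory Submission
  imports Defs
begin


lemma infdist_approx:
  assumes "A \<noteq> {}" "e > 0"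
  shows "\<exists>a\<in>A. dist x a < infdist x A + e"
proof -
  have "(INF a\<in>A. dist x a) < infdist x A + e" using assms by (simp add: infdist_notempty)
  then show ?thesis using assms(1) by (subst (asm) cINF_less_iff) auto
qed

lemma inj_subseq:
  fixes s :: "nat \<Rightarrow> real"
  assumes pos: "\<And>k. s k > 0" and lim: "s \<longlonglongrightarrow> 0"
  shows "\<exists>\<phi>::nat\<Rightarrow>nat. strict_mono \<phi> \<and> inj (s \<circ> \<phi>)"
proof -
  have "\<forall>n. \<exists>m. m > n \<and> s m < s n"
  proof
    fix n
    have "eventually (\<lambda>m. s m < s n) sequentially"
      using order_tendstoD(2)[OF lim pos[of n]] .
    then obtain M where "\<forall>m\<ge>M. s m < s n" by (auto simp: eventually_sequentially)
    then show "\<exists>m. m > n \<and> s m < s n" by (intro exI[of _ "max M (Suc n)"]) auto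
  qed
  then obtain g where g: "\<And>n. g n > n \<and> s (g n) < s n" by metis
  define \<phi> where "\<phi> k = (g ^^ k) 0" for k
  have suc: "\<phi> (Suc k) = g (\<phi> k)" for k by (simp add: \<phi>_def)
  have "strict_mono \<phi>" unfolding strict_mono_Suc_iff using g suc by auto
  moreover have "strict_mono (\<lambda>k. - s (\<phi> k))" unfolding strict_mono_Suc_iff using g suc by auto
  then have "inj (\<lambda>k. - s (\<phi> k))" by (rule strict_mono_imp_inj_on)
  then have "inj (s \<circ> \<phi>)" by (auto simp: inj_def)
  ultimately show ?thesis by (intro exI[of _ \<phi>]) simp
qed

lemma path_lemma:
  fixes t :: "nat \<Rightarrow> real" and w :: "nat \<Rightarrow> 'a::real_normed_vector"
  assumes inj: "inj t" and pos: "\<And>k. t k > 0" and tw: "(\<lambda>k. t k *\<^sub>R w k) \<longlonglongrightarrow> 0"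
  shows "\<exists>wp. ((\<lambda>s. s *\<^sub>R wp s) \<longlongrightarrow> 0) (at_right 0) \<and> (\<forall>k. wp (t k) = w k)"
proof -
  define wp where "wp s = (if s \<in> range t then w (inv t s) else 0)" for s
  have wpt: "wp (t k) = w k" for k using inj by (simp add: wp_def)
  have "((\<lambda>s. s *\<^sub>R wp s) \<longlongrightarrow> 0) (at_right 0)"
    unfolding tendsto_iff
  proof (intro allI impI)
    fix e :: real assume e: "e > 0"
    obtain N where N: "\<And>k. k \<ge> N \<Longrightarrow> norm (t k *\<^sub>R w k) < e"
      using tw e unfolding LIMSEQ_iff by auto
    define b where "b = Min (insert 1 (t ` {..<N}))"
    have b0: "b > 0" unfolding b_def using pos by (subst Min_gr_iff) auto
    have bt: "k < N \<Longrightarrow> b \<le> t k" for k unfolding b_def by (intro Min_le) auto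
    show "eventually (\<lambda>s. dist (s *\<^sub>R wp s) 0 < e) (at_right 0)"
      unfolding eventually_at_right_field
    proof (intro exI[of _ b] conjI allI impI)
      fix y :: real assume y: "y > 0" "y < b"
      show "dist (y *\<^sub>R wp y) 0 < e"
      proof (cases "y \<in> range t")
        case True
        then obtain k where k: "y = t k" by auto
        have "k \<ge> N" using bt[of k] y k by (cases "k < N") auto
        then show ?thesis using N[of k] k wpt by simp
      next
        case False
        then show ?thesis using e by (simp add: wp_def)
      qed
    qed (use b0 in auto)
  qed
  then show ?thesis using wpt by blast
qed


lemma dir_tendsto:
  assumes "dir_differentiable g x d"
  shows "((\<lambda>t. (1 / t) *\<^sub>R (g (x + t *\<^sub>R d) - g x)) \<longlongrightarrow> dir_deriv g x d) (at_right 0)"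
proof -
  from assms obtain v where v: "((\<lambda>t. (1 / t) *\<^sub>R (g (x + t *\<^sub>R d) - g x)) \<longlongrightarrow> v) (at_right 0)"
    unfolding dir_differentiable_def by blast
  then have "dir_deriv g x d = v" unfolding dir_deriv_def by (intro tendsto_Lim) auto
  then show ?thesis using v by simp
qed

lemma so_tendsto:
  assumes "so_dir_differentiable g x"
  shows "(so_quot g x d w \<longlongrightarrow> so_dir_deriv g x d w) (at_right 0)"
proof -
  from assms obtain v where v: "(so_quot g x d w \<longlongrightarrow> v) (at_right 0)"
    unfolding so_dir_differentiable_def by blast
  then have "so_dir_deriv g x d w = v" unfolding so_dir_deriv_def by (intro tendsto_Lim) auto
  then show ?thesis using v by simp
qed

lemma seq_at_right:
  fixes t :: "nat \<Rightarrow> real"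
  assumes "\<And>k. t k > 0" "t \<longlonglongrightarrow> 0"
  shows "filterlim t (at_right 0) sequentially"
  using assms by (intro tendsto_imp_filterlim_at_right) auto

lemma seq_gph:
  fixes G :: "'a::real_normed_vector \<Rightarrow> 'b::real_normed_vector"
  assumes reg: "so_gph_regular G x" and inj: "inj t" and pos: "\<And>k. t k > 0" and t0: "t \<longlonglongrightarrow> 0"
    and tw: "(\<lambda>k. t k *\<^sub>R w k) \<longlonglongrightarrow> 0"
  shows "(\<lambda>k. so_quot G x d (w k) (t k) - so_dir_deriv G x d (w k)) \<longlonglongrightarrow> 0"
proof -
  obtain wp where wp: "((\<lambda>s. s *\<^sub>R wp s) \<longlongrightarrow> 0) (at_right 0)" "\<And>k. wp (t k) = w k"
    using path_lemma[OF inj pos tw] by blast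
  obtain r where r: "((\<lambda>s. norm (r s) / s\<^sup>2) \<longlongrightarrow> 0) (at_right 0)"
    and eq: "\<And>s. s \<ge> 0 \<Longrightarrow> G (x + s *\<^sub>R d + (s\<^sup>2 / 2) *\<^sub>R wp s) =
                   G x + s *\<^sub>R dir_deriv G x d + (s\<^sup>2 / 2) *\<^sub>R so_dir_deriv G x d (wp s) + r s"
    using reg wp(1) unfolding so_gph_regular_def by blast
  have rt: "(\<lambda>k. norm (r (t k)) / (t k)\<^sup>2) \<longlonglongrightarrow> 0"
    using filterlim_compose[OF r seq_at_right[OF pos t0]] by simp
  have "so_quot G x d (w k) (t k) - so_dir_deriv G x d (w k) = (2 / (t k)\<^sup>2) *\<^sub>R r (t k)" for k
  proof -
    have tk: "t k > 0" by (rule pos)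
    have "so_quot G x d (w k) (t k) = (2 / (t k)\<^sup>2) *\<^sub>R ((((t k)\<^sup>2 / 2) *\<^sub>R so_dir_deriv G x d (w k) + r (t k)))"
      unfolding so_quot_def using eq[of "t k"] tk wp(2)[of k] by simp
    also have "\<dots> = so_dir_deriv G x d (w k) + (2 / (t k)\<^sup>2) *\<^sub>R r (t k)"
      using tk by (simp add: scaleR_add_right)
    finally show ?thesis by simp
  qed
  moreover have "(\<lambda>k. norm ((2 / (t k)\<^sup>2) *\<^sub>R r (t k))) \<longlonglongrightarrow> 0"
  proof -
    have "(\<lambda>k. 2 * (norm (r (t k)) / (t k)\<^sup>2)) \<longlonglongrightarrow> 2 * 0" by (intro tendsto_mult tendsto_const rt)
    moreover have "norm ((2 / (t k)\<^sup>2) *\<^sub>R r (t k)) = 2 * (norm (r (t k)) / (t k)\<^sup>2)" for k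
      by simp
    ultimately show ?thesis by simp
  qed
  then have "(\<lambda>k. (2 / (t k)\<^sup>2) *\<^sub>R r (t k)) \<longlonglongrightarrow> 0"
    by (rule tendsto_norm_zero_cancel)
  ultimately show ?thesis by simp
qed

lemma seq_epi:
  fixes f :: "'a::real_normed_vector \<Rightarrow> real"
  assumes reg: "so_epi_regular f x" and inj: "inj t" and pos: "\<And>k. t k > 0" and t0: "t \<longlonglongrightarrow> 0"
    and tw: "(\<lambda>k. t k *\<^sub>R w k) \<longlonglongrightarrow> 0"
  shows "\<exists>e. e \<longlonglongrightarrow> 0 \<and> (\<forall>k. so_quot f x d (w k) (t k) \<ge> so_dir_deriv f x d (w k) + e k)"
proof -
  obtain wp where wp: "((\<lambda>s. s *\<^sub>R wp s) \<longlongrightarrow> 0) (at_right 0)" "\<And>k. wp (t k) = w k"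
    using path_lemma[OF inj pos tw] by blast
  obtain r where r: "((\<lambda>s. \<bar>r s\<bar> / s\<^sup>2) \<longlongrightarrow> 0) (at_right 0)"
    and ineq: "\<And>s. s \<ge> 0 \<Longrightarrow> f (x + s *\<^sub>R d + (s\<^sup>2 / 2) *\<^sub>R wp s) \<ge>
                   f x + s * dir_deriv f x d + (s\<^sup>2 / 2) * so_dir_deriv f x d (wp s) + r s"
    using reg wp(1) unfolding so_epi_regular_def by blast
  have rt: "(\<lambda>k. \<bar>r (t k)\<bar> / (t k)\<^sup>2) \<longlonglongrightarrow> 0"
    using filterlim_compose[OF r seq_at_right[OF pos t0]] by simp
  define e where "e k = 2 * (r (t k) / (t k)\<^sup>2)" for k
  have "so_quot f x d (w k) (t k) \<ge> so_dir_deriv f x d (w k) + e k" for k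
  proof -
    have tk: "t k > 0" by (rule pos)
    have "f (x + t k *\<^sub>R d + ((t k)\<^sup>2 / 2) *\<^sub>R w k) - f x - t k * dir_deriv f x d
          \<ge> ((t k)\<^sup>2 / 2) * so_dir_deriv f x d (w k) + r (t k)"
      using ineq[of "t k"] tk wp(2)[of k] by simp
    then have "(2 / (t k)\<^sup>2) * (f (x + t k *\<^sub>R d + ((t k)\<^sup>2 / 2) *\<^sub>R w k) - f x - t k * dir_deriv f x d)
          \<ge> (2 / (t k)\<^sup>2) * (((t k)\<^sup>2 / 2) * so_dir_deriv f x d (w k) + r (t k))"
      using tk by (intro mult_left_mono) auto
    also have "(2 / (t k)\<^sup>2) * (((t k)\<^sup>2 / 2) * so_dir_deriv f x d (w k) + r (t k))
       = so_dir_deriv f x d (w k) + e k" using tk by (simp add: e_def field_simps)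
    finally show ?thesis unfolding so_quot_def by simp
  qed
  moreover have "e \<longlonglongrightarrow> 0"
  proof -
    have "(\<lambda>k. 2 * (\<bar>r (t k)\<bar> / (t k)\<^sup>2)) \<longlonglongrightarrow> 2 * 0" by (intro tendsto_mult tendsto_const rt)
    moreover have "\<bar>e k\<bar> = 2 * (\<bar>r (t k)\<bar> / (t k)\<^sup>2)" for k
      by (simp add: e_def abs_mult)
    ultimately have "(\<lambda>k. \<bar>e k\<bar>) \<longlonglongrightarrow> 0" by simp
    then show ?thesis by (simp add: tendsto_rabs_zero_iff)
  qed
  ultimately show ?thesis by blast
qed

lemma so_lip:
  fixes g :: "'a::real_normed_vector \<Rightarrow> 'b::real_normed_vector"
  assumes lip: "loc_lipschitz_at g x" and sd: "so_dir_differentiable g x"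
  shows "\<exists>L\<ge>0. \<forall>d w w'. norm (so_dir_deriv g x d w - so_dir_deriv g x d w') \<le> L * norm (w - w')"
proof -
  obtain e L where e: "e > 0" and L: "L-lipschitz_on (ball x e) g"
    using lip unfolding loc_lipschitz_at_def by blast
  have L0: "L \<ge> 0" using L unfolding lipschitz_on_def by simp
  have "norm (so_dir_deriv g x d w - so_dir_deriv g x d w') \<le> L * norm (w - w')" for d w w'
  proof -
    have conv: "((\<lambda>s. norm (so_quot g x d w s - so_quot g x d w' s)) \<longlongrightarrow>
        norm (so_dir_deriv g x d w - so_dir_deriv g x d w')) (at_right 0)"
      by (intro tendsto_norm tendsto_diff so_tendsto sd)
    have p: "((\<lambda>s. x + s *\<^sub>R d + (s\<^sup>2 / 2) *\<^sub>R v) \<longlongrightarrow> x) (at_right 0)" for v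
    proof -
      have "((\<lambda>s::real. x + s *\<^sub>R d + (s\<^sup>2 / 2) *\<^sub>R v) \<longlongrightarrow> x + 0 *\<^sub>R d + (0\<^sup>2 / 2) *\<^sub>R v) (at_right 0)"
        by (intro tendsto_intros) auto
      then show ?thesis by simp
    qed
    have ev: "eventually (\<lambda>s. x + s *\<^sub>R d + (s\<^sup>2 / 2) *\<^sub>R v \<in> ball x e) (at_right 0)" for v
      using tendstoD[OF p[of v] e] by (simp add: dist_commute)
    have "eventually (\<lambda>s. norm (so_quot g x d w s - so_quot g x d w' s) \<le> L * norm (w - w')) (at_right 0)"
      using ev[of w] ev[of w'] eventually_at_right_less[of "0::real"]
    proof eventually_elim
      case (elim s)
      have "norm (so_quot g x d w s - so_quot g x d w' s)
          = (2 / s\<^sup>2) * norm (g (x + s *\<^sub>R d + (s\<^sup>2 / 2) *\<^sub>R w) - g (x + s *\<^sub>R d + (s\<^sup>2 / 2) *\<^sub>R w'))"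
      proof -
        have "so_quot g x d w s - so_quot g x d w' s = (2 / s\<^sup>2) *\<^sub>R
           (g (x + s *\<^sub>R d + (s\<^sup>2 / 2) *\<^sub>R w) - g (x + s *\<^sub>R d + (s\<^sup>2 / 2) *\<^sub>R w'))"
          unfolding so_quot_def by (simp add: scaleR_diff_right)
        then show ?thesis by simp
      qed
      also have "\<dots> \<le> (2 / s\<^sup>2) * (L * dist (x + s *\<^sub>R d + (s\<^sup>2 / 2) *\<^sub>R w) (x + s *\<^sub>R d + (s\<^sup>2 / 2) *\<^sub>R w'))"
      proof -
        have "dist (g (x + s *\<^sub>R d + (s\<^sup>2 / 2) *\<^sub>R w)) (g (x + s *\<^sub>R d + (s\<^sup>2 / 2) *\<^sub>R w'))
           \<le> L * dist (x + s *\<^sub>R d + (s\<^sup>2 / 2) *\<^sub>R w) (x + s *\<^sub>R d + (s\<^sup>2 / 2) *\<^sub>R w')"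
          using L elim unfolding lipschitz_on_def by blast
        then show ?thesis using elim by (intro mult_left_mono) (auto simp: dist_norm)
      qed
      also have "dist (x + s *\<^sub>R d + (s\<^sup>2 / 2) *\<^sub>R w) (x + s *\<^sub>R d + (s\<^sup>2 / 2) *\<^sub>R w') = (s\<^sup>2 / 2) * norm (w - w')"
        by (simp add: dist_norm scaleR_diff_right[symmetric])
      also have "(2 / s\<^sup>2) * (L * ((s\<^sup>2 / 2) * norm (w - w'))) = L * norm (w - w')"
        using elim by (simp add: field_simps)
      finally show ?case .
    qed
    then show ?thesis
      using tendsto_le[OF trivial_limit_at_right_real tendsto_const conv] by blast
  qed
  then show ?thesis using L0 by blast
qed


lemma lip_seq:
  fixes h :: "'a::real_normed_vector \<Rightarrow> 'b::real_normed_vector"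
  assumes "\<forall>a b. norm (h a - h b) \<le> L * norm (a - b)" and "X \<longlonglongrightarrow> l"
  shows "(\<lambda>j. h (X j)) \<longlonglongrightarrow> h l"
proof -
  have lim1: "(\<lambda>j. L * norm (X j - l)) \<longlonglongrightarrow> 0"
    using assms(2) tendsto_mult[OF tendsto_const, of "\<lambda>j. norm (X j - l)" 0 sequentially L]
    by (simp add: tendsto_norm_zero_iff LIM_zero)
  have "(\<lambda>j. h (X j) - h l) \<longlonglongrightarrow> 0"
  proof (rule Lim_null_comparison[OF _ lim1])
    show "eventually (\<lambda>j. norm (h (X j) - h l) \<le> L * norm (X j - l)) sequentially"
      using assms(1) by (intro always_eventually) blast
  qed
  then show ?thesis by (rule LIM_zero_cancel)
qed


lemma scale_inv1:
  fixes X :: "'a::real_vector"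
  assumes "(s::real) \<noteq> 0"
  shows "(s\<^sup>2 / 2) *\<^sub>R ((2 / s\<^sup>2) *\<^sub>R X) = X"
proof -
  have "(s\<^sup>2 / 2) * (2 / s\<^sup>2) = 1" using assms by (simp add: field_simps)
  then show ?thesis by (simp only: scaleR_scaleR scaleR_one)
qed

lemma scale_inv2:
  fixes X :: "'a::real_vector"
  assumes "(s::real) \<noteq> 0"
  shows "(2 / s\<^sup>2) *\<^sub>R ((s\<^sup>2 / 2) *\<^sub>R X) = X"
proof -
  have "(2 / s\<^sup>2) * (s\<^sup>2 / 2) = 1" using assms by (simp add: field_simps)
  then show ?thesis by (simp only: scaleR_scaleR scaleR_one)
qed

lemma mscq_step:
  fixes G :: "'n::euclidean_space \<Rightarrow> 'm::euclidean_space"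
  assumes reg: "so_gph_regular G xs" and Gxs: "G xs \<in> K"
    and U: "open U" "xs \<in> U" and kap: "\<kappa> > 0"
    and ms: "\<forall>y\<in>U. infdist y {z. G z \<in> K} \<le> \<kappa> * infdist (G y) K"
    and u: "u \<in> so_tangent_set K (G xs) (dir_deriv G xs d)" and eps: "\<epsilon> > 0"
  shows "\<exists>w'. so_dir_deriv G xs d w' \<in> so_tangent_set K (G xs) (dir_deriv G xs d) \<and>
           norm (w' - w) \<le> \<kappa> * norm (so_dir_deriv G xs d w - u) + \<epsilon>"
proof -
  define g1 where "g1 = dir_deriv G xs d"
  define g2 where "g2 v = so_dir_deriv G xs d v" for v
  define T2 where "T2 = so_tangent_set K (G xs) g1"
  define Psi where "Psi = {z. G z \<in> K}"
  have sd: "so_dir_differentiable G xs" using reg unfolding so_gph_regular_def by blast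
  obtain Lg where Lg: "\<forall>a b. norm (g2 a - g2 b) \<le> Lg * norm (a - b)"
    using so_lip[of G xs] reg unfolding so_gph_regular_def g2_def by blast
  obtain s0 z0 where s0: "\<And>k. s0 k > 0" "s0 \<longlonglongrightarrow> 0" and z0: "z0 \<longlonglongrightarrow> u"
    and inK0: "\<And>k. G xs + s0 k *\<^sub>R g1 + ((s0 k)\<^sup>2 / 2) *\<^sub>R z0 k \<in> K"
    using u unfolding so_tangent_set_def g1_def by blast
  obtain \<phi> :: "nat \<Rightarrow> nat" where \<phi>: "strict_mono \<phi>" "inj (s0 \<circ> \<phi>)"
    using inj_subseq[OF s0] by blast
  define s where "s = s0 \<circ> \<phi>"
  define z where "z = z0 \<circ> \<phi>"
  have spos: "\<And>k. s k > 0" using s0 by (simp add: s_def)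
  have s_lim: "s \<longlonglongrightarrow> 0" unfolding s_def by (rule LIMSEQ_subseq_LIMSEQ[OF s0(2) \<phi>(1)])
  have z_lim: "z \<longlonglongrightarrow> u" unfolding z_def by (rule LIMSEQ_subseq_LIMSEQ[OF z0 \<phi>(1)])
  have s_inj: "inj s" using \<phi> by (simp add: s_def)
  have inK: "\<And>k. G xs + s k *\<^sub>R g1 + ((s k)\<^sup>2 / 2) *\<^sub>R z k \<in> K" using inK0 by (simp add: s_def z_def)
  define y where "y j = xs + s j *\<^sub>R d + ((s j)\<^sup>2 / 2) *\<^sub>R w" for j
  have y_lim: "y \<longlonglongrightarrow> xs"
  proof -
    have "y \<longlonglongrightarrow> xs + 0 *\<^sub>R d + (0\<^sup>2 / 2) *\<^sub>R w" unfolding y_def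
      by (intro tendsto_intros s_lim) auto
    then show ?thesis by simp
  qed
  have q_lim: "(\<lambda>j. so_quot G xs d w (s j)) \<longlonglongrightarrow> g2 w"
    using filterlim_compose[OF so_tendsto[OF sd] seq_at_right[OF spos s_lim]] by (simp add: g2_def)
  have Gy: "G (y j) = G xs + s j *\<^sub>R g1 + ((s j)\<^sup>2 / 2) *\<^sub>R so_quot G xs d w (s j)" for j
  proof -
    have "((s j)\<^sup>2 / 2) *\<^sub>R so_quot G xs d w (s j) = G (y j) - G xs - s j *\<^sub>R g1"
      unfolding so_quot_def y_def g1_def using spos[of j] by (intro scale_inv1) simp
    then show ?thesis by simp
  qed
  have idK: "infdist (G (y j)) K \<le> ((s j)\<^sup>2 / 2) * norm (so_quot G xs d w (s j) - z j)" for j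
  proof -
    have "infdist (G (y j)) K \<le> dist (G (y j)) (G xs + s j *\<^sub>R g1 + ((s j)\<^sup>2 / 2) *\<^sub>R z j)"
      by (rule infdist_le[OF inK])
    also have "\<dots> = norm (((s j)\<^sup>2 / 2) *\<^sub>R (so_quot G xs d w (s j) - z j))"
      unfolding Gy dist_norm by (simp add: scaleR_diff_right)
    also have "\<dots> = ((s j)\<^sup>2 / 2) * norm (so_quot G xs d w (s j) - z j)" by simp
    finally show ?thesis .
  qed
  have PsiNE: "Psi \<noteq> {}" using Gxs by (auto simp: Psi_def)
  have "\<forall>j. \<exists>y'. y' \<in> Psi \<and> dist (y j) y' < infdist (y j) Psi + ((s j)\<^sup>2 / 2) * (\<epsilon> / 2)"
  proof
    fix j
    have "((s j)\<^sup>2 / 2) * (\<epsilon> / 2) > 0" using spos[of j] eps by simp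
    from infdist_approx[OF PsiNE this] show "\<exists>y'. y' \<in> Psi \<and> dist (y j) y' < infdist (y j) Psi + ((s j)\<^sup>2 / 2) * (\<epsilon> / 2)"
      by blast
  qed
  then obtain y' where y': "\<And>j. y' j \<in> Psi" "\<And>j. dist (y j) (y' j) < infdist (y j) Psi + ((s j)\<^sup>2 / 2) * (\<epsilon> / 2)"
    by metis
  define w' where "w' j = (2 / (s j)\<^sup>2) *\<^sub>R (y' j - xs - s j *\<^sub>R d)" for j
  have y'eq: "y' j = xs + s j *\<^sub>R d + ((s j)\<^sup>2 / 2) *\<^sub>R w' j" for j
  proof -
    have "((s j)\<^sup>2 / 2) *\<^sub>R w' j = y' j - xs - s j *\<^sub>R d"
      unfolding w'_def using spos[of j] by (intro scale_inv1) simp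
    then show ?thesis by simp
  qed
  define B where "B = \<kappa> * norm (g2 w - u) + \<epsilon>"
  have "eventually (\<lambda>j. y j \<in> U) sequentially"
    using topological_tendstoD[OF y_lim U] .
  moreover have "eventually (\<lambda>j. \<kappa> * norm (so_quot G xs d w (s j) - z j) + \<epsilon> / 2 < B) sequentially"
  proof -
    have "(\<lambda>j. \<kappa> * norm (so_quot G xs d w (s j) - z j) + \<epsilon> / 2) \<longlonglongrightarrow> \<kappa> * norm (g2 w - u) + \<epsilon> / 2"
      by (intro tendsto_intros q_lim z_lim)
    moreover have "\<kappa> * norm (g2 w - u) + \<epsilon> / 2 < B" using eps by (simp add: B_def)
    ultimately show ?thesis by (rule order_tendstoD)
  qed
  ultimately have "eventually (\<lambda>j. norm (w' j - w) \<le> B) sequentially"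
  proof eventually_elim
    case (elim j)
    have sj: "s j > 0" by (rule spos)
    have "dist (y j) (y' j) < \<kappa> * (((s j)\<^sup>2 / 2) * norm (so_quot G xs d w (s j) - z j)) + ((s j)\<^sup>2 / 2) * (\<epsilon> / 2)"
    proof -
      have "infdist (y j) Psi \<le> \<kappa> * infdist (G (y j)) K" using ms elim by (simp add: Psi_def)
      also have "\<dots> \<le> \<kappa> * (((s j)\<^sup>2 / 2) * norm (so_quot G xs d w (s j) - z j))"
        using kap idK by (intro mult_left_mono) auto
      finally show ?thesis using y'(2)[of j] by linarith
    qed
    also have "\<dots> = ((s j)\<^sup>2 / 2) * (\<kappa> * norm (so_quot G xs d w (s j) - z j) + \<epsilon> / 2)"
      by (simp add: algebra_simps)
    finally have dlt: "dist (y j) (y' j) < ((s j)\<^sup>2 / 2) * (\<kappa> * norm (so_quot G xs d w (s j) - z j) + \<epsilon> / 2)" .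
    have "w' j - w = (2 / (s j)\<^sup>2) *\<^sub>R (y' j - y j)"
    proof -
      have "(2 / (s j)\<^sup>2) *\<^sub>R (y' j - y j) = (2 / (s j)\<^sup>2) *\<^sub>R ((y' j - xs - s j *\<^sub>R d) - ((s j)\<^sup>2 / 2) *\<^sub>R w)"
        unfolding y_def by (simp add: algebra_simps)
      also have "\<dots> = w' j - (2 / (s j)\<^sup>2) *\<^sub>R (((s j)\<^sup>2 / 2) *\<^sub>R w)"
        unfolding w'_def by (simp only: scaleR_diff_right)
      also have "\<dots> = w' j - w" using sj by (simp only: scale_inv2)
      finally show ?thesis by simp
    qed
    then have "norm (w' j - w) = (2 / (s j)\<^sup>2) * dist (y j) (y' j)"
      by (simp add: dist_norm norm_minus_commute)
    also have "\<dots> \<le> (2 / (s j)\<^sup>2) * (((s j)\<^sup>2 / 2) * (\<kappa> * norm (so_quot G xs d w (s j) - z j) + \<epsilon> / 2))"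
      using dlt sj by (intro mult_left_mono) auto
    also have "\<dots> = \<kappa> * norm (so_quot G xs d w (s j) - z j) + \<epsilon> / 2" using sj by simp
    finally show ?case using elim by linarith
  qed
  then obtain N where N: "\<And>j. j \<ge> N \<Longrightarrow> norm (w' j - w) \<le> B"
    by (auto simp: eventually_sequentially)
  define ww where "ww j = w' (j + N)" for j
  define ss where "ss j = s (j + N)" for j
  have "range ww \<subseteq> cball w B" using N by (auto simp: ww_def dist_norm norm_minus_commute)
  then have "bounded (range ww)" using bounded_cball bounded_subset by blast
  then obtain wst r where r: "strict_mono r" and wlim: "(ww \<circ> r) \<longlonglongrightarrow> wst"
    using bounded_imp_convergent_subsequence by blast
  have "wst \<in> cball w B"
    using Lim_in_closed_set[OF closed_cball _ _ wlim] N by (auto simp: ww_def dist_norm norm_minus_commute)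
  then have wst_B: "norm (wst - w) \<le> B" by (simp add: dist_norm norm_minus_commute)
  define t where "t j = ss (r j)" for j
  have tpos: "\<And>j. t j > 0" using spos by (simp add: t_def ss_def)
  have tlim: "t \<longlonglongrightarrow> 0"
  proof -
    have "ss \<longlonglongrightarrow> 0" unfolding ss_def by (rule LIMSEQ_ignore_initial_segment[OF s_lim])
    then have "(ss \<circ> r) \<longlonglongrightarrow> 0" by (rule LIMSEQ_subseq_LIMSEQ[OF _ r])
    then show ?thesis by (simp add: t_def[abs_def] comp_def)
  qed
  have tinj: "inj t"
  proof -
    have "inj (\<lambda>j. r j + N)" using strict_mono_imp_inj_on[OF r] by (auto simp: inj_def)
    then show ?thesis using s_inj unfolding inj_def t_def ss_def by (metis add_right_cancel)
  qed
  have wlim': "(\<lambda>j. ww (r j)) \<longlonglongrightarrow> wst" using wlim by (simp add: comp_def)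
  have tw: "(\<lambda>j. t j *\<^sub>R ww (r j)) \<longlonglongrightarrow> 0"
    using tendsto_scaleR[OF tlim wlim'] by simp
  have err: "(\<lambda>j. so_quot G xs d (ww (r j)) (t j) - g2 (ww (r j))) \<longlonglongrightarrow> 0"
    using seq_gph[OF reg tinj tpos tlim tw] by (simp add: g2_def)
  have g2lim: "(\<lambda>j. g2 (ww (r j))) \<longlonglongrightarrow> g2 wst" by (rule lip_seq[OF Lg wlim'])
  have "g2 wst \<in> T2"
    unfolding T2_def so_tangent_set_def
  proof (intro CollectI exI conjI allI)
    show "\<And>k. t k > 0" by (rule tpos)
    show "t \<longlonglongrightarrow> 0" by (rule tlim)
    show "(\<lambda>j. so_quot G xs d (ww (r j)) (t j)) \<longlonglongrightarrow> g2 wst"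
      using tendsto_add[OF err g2lim] by simp
    fix k
    have tk: "t k > 0" by (rule tpos)
    have "G xs + t k *\<^sub>R g1 + ((t k)\<^sup>2 / 2) *\<^sub>R so_quot G xs d (ww (r k)) (t k)
        = G (xs + t k *\<^sub>R d + ((t k)\<^sup>2 / 2) *\<^sub>R ww (r k))"
    proof -
      have "((t k)\<^sup>2 / 2) *\<^sub>R so_quot G xs d (ww (r k)) (t k)
          = G (xs + t k *\<^sub>R d + ((t k)\<^sup>2 / 2) *\<^sub>R ww (r k)) - G xs - t k *\<^sub>R g1"
        unfolding so_quot_def g1_def using tk by (intro scale_inv1) simp
      then show ?thesis by simp
    qed
    also have "xs + t k *\<^sub>R d + ((t k)\<^sup>2 / 2) *\<^sub>R ww (r k) = y' (r k + N)"
      using y'eq[of "r k + N"] by (simp add: t_def ss_def ww_def)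
    finally show "G xs + t k *\<^sub>R g1 + ((t k)\<^sup>2 / 2) *\<^sub>R so_quot G xs d (ww (r k)) (t k) \<in> K"
      using y'(1)[of "r k + N"] by (simp add: Psi_def)
  qed
  then show ?thesis using wst_B unfolding T2_def g1_def g2_def B_def by blast
qed



lemma core:
  fixes f :: "'n::euclidean_space \<Rightarrow> real"
    and G :: "'n \<Rightarrow> 'm::euclidean_space"
    and K :: "'m set" and xs :: 'n
  assumes Gxs: "G xs \<in> K"
    and freg: "so_epi_regular f xs"
    and Greg: "so_gph_regular G xs"
    and mscq: "MSCQ G K xs"
    and osr: "\<forall>d. dir_deriv G xs d \<in> tangent_cone K (G xs) \<longrightarrow>
             outer_so_regular K (G xs) (dir_deriv G xs d)"
    and fo: "\<forall>d. dir_deriv G xs d \<in> tangent_cone K (G xs) \<longrightarrow> dir_deriv f xs d \<ge> 0"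
    and so: "\<forall>d\<in>critical_cone f G K xs - {0}.
           (INF w\<in>{w. so_dir_deriv G xs d w \<in> so_tangent_set K (G xs) (dir_deriv G xs d)}.
              ereal (so_dir_deriv f xs d w)) > 0"
    and xK: "\<And>k. G (x k) \<in> K"
    and tdef: "\<And>k. t k = norm (x k - xs)" and tpos: "\<And>k. t k > 0" and tinj: "inj t"
    and tlim: "t \<longlonglongrightarrow> 0"
    and dlim: "(\<lambda>k. (1 / t k) *\<^sub>R (x k - xs)) \<longlonglongrightarrow> d" and dn: "norm d = 1"
    and clim: "c \<longlonglongrightarrow> 0" and fx: "\<And>k. f (x k) < f xs + c k * (t k)\<^sup>2"
  shows False
proof -
  define g1 where "g1 = dir_deriv G xs d"
  define g2 where "g2 v = so_dir_deriv G xs d v" for v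
  define f1 where "f1 = dir_deriv f xs d"
  define f2 where "f2 v = so_dir_deriv f xs d v" for v
  define T2 where "T2 = so_tangent_set K (G xs) g1"
  define dk where "dk k = (1 / t k) *\<^sub>R (x k - xs)" for k
  define w where "w k = (2 / t k) *\<^sub>R (dk k - d)" for k
  have fsd: "so_dir_differentiable f xs" and flip: "loc_lipschitz_at f xs"
    using freg unfolding so_epi_regular_def by auto
  have Gsd: "so_dir_differentiable G xs" and Glip: "loc_lipschitz_at G xs"
    using Greg unfolding so_gph_regular_def by auto
  obtain eG LG where eG: "eG > 0" and LG: "LG-lipschitz_on (ball xs eG) G"
    using Glip unfolding loc_lipschitz_at_def by blast
  obtain ef Lf where ef: "ef > 0" and Lf: "Lf-lipschitz_on (ball xs ef) f"
    using flip unfolding loc_lipschitz_at_def by blast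
  obtain Lf2 where Lf2: "Lf2 \<ge> 0" "\<forall>a b. norm (f2 a - f2 b) \<le> Lf2 * norm (a - b)"
    using so_lip[OF flip fsd] unfolding f2_def by blast
  obtain U \<kappa> where U: "open U" "xs \<in> U" and kap: "\<kappa> > 0"
    and ms: "\<forall>y\<in>U. infdist y {z. G z \<in> K} \<le> \<kappa> * infdist (G y) K"
    using mscq unfolding MSCQ_def by blast
  have tk0: "t k \<noteq> 0" for k using tpos[of k] by simp
  have dklim: "dk \<longlonglongrightarrow> d" unfolding dk_def using dlim .
  have xdk: "x k - xs = t k *\<^sub>R dk k" for k using tk0[of k] by (simp add: dk_def)
  have xeq: "x k = xs + t k *\<^sub>R d + ((t k)\<^sup>2 / 2) *\<^sub>R w k" for k
  proof -
    have "((t k)\<^sup>2 / 2) *\<^sub>R w k = t k *\<^sub>R (dk k - d)"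
      using tk0[of k] by (simp add: w_def scaleR_scaleR power2_eq_square)
    then show ?thesis using xdk[of k] by (simp add: algebra_simps)
  qed
  have tw: "(\<lambda>k. t k *\<^sub>R w k) \<longlonglongrightarrow> 0"
  proof -
    have "t k *\<^sub>R w k = 2 *\<^sub>R (dk k - d)" for k using tk0[of k] by (simp add: w_def)
    moreover have "(\<lambda>k. 2 *\<^sub>R (dk k - d)) \<longlonglongrightarrow> 2 *\<^sub>R (d - d)"
      by (intro tendsto_intros dklim)
    ultimately show ?thesis by simp
  qed
  have xlim: "x \<longlonglongrightarrow> xs"
  proof -
    have "(\<lambda>k. xs + t k *\<^sub>R dk k) \<longlonglongrightarrow> xs + 0 *\<^sub>R d" by (intro tendsto_intros tlim dklim)
    moreover have "x = (\<lambda>k. xs + t k *\<^sub>R dk k)" using xdk by (auto simp: algebra_simps)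
    ultimately show ?thesis by simp
  qed
  have xdlim: "(\<lambda>k. xs + t k *\<^sub>R d) \<longlonglongrightarrow> xs"
  proof -
    have "(\<lambda>k. xs + t k *\<^sub>R d) \<longlonglongrightarrow> xs + 0 *\<^sub>R d" by (intro tendsto_intros tlim)
    then show ?thesis by simp
  qed
  have ev_ball: "eventually (\<lambda>k. x k \<in> ball xs e \<and> xs + t k *\<^sub>R d \<in> ball xs e) sequentially" if "e > 0" for e
    using tendstoD[OF xlim that] tendstoD[OF xdlim that]
    by eventually_elim (auto simp: dist_commute)
  have dist_xd: "dist (x k) (xs + t k *\<^sub>R d) = t k * norm (dk k - d)" for k
  proof -
    have "x k - (xs + t k *\<^sub>R d) = t k *\<^sub>R (dk k - d)" using xdk[of k] by (simp add: algebra_simps)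
    then show ?thesis using tpos[of k] by (simp add: dist_norm)
  qed
  have ndlim: "(\<lambda>k. norm (dk k - d)) \<longlonglongrightarrow> 0"
    using dklim by (simp add: tendsto_norm_zero_iff LIM_zero)
  have tfil: "filterlim t (at_right 0) sequentially" by (rule seq_at_right[OF tpos tlim])
  define v where "v k = so_quot G xs d (w k) (t k)" for k
  have vK: "G xs + t k *\<^sub>R g1 + ((t k)\<^sup>2 / 2) *\<^sub>R v k = G (x k)" for k
  proof -
    have "((t k)\<^sup>2 / 2) *\<^sub>R v k = G (x k) - G xs - t k *\<^sub>R g1"
      unfolding v_def so_quot_def g1_def xeq[of k, symmetric] using tk0[of k] by (intro scale_inv1) simp
    then show ?thesis by simp
  qed
  have vA: "(\<lambda>k. v k - g2 (w k)) \<longlonglongrightarrow> 0"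
    using seq_gph[OF Greg tinj tpos tlim tw] by (simp add: v_def g2_def)
  have tv: "(\<lambda>k. t k *\<^sub>R v k) \<longlonglongrightarrow> 0"
  proof -
    have eq: "t k *\<^sub>R v k = 2 *\<^sub>R ((1 / t k) *\<^sub>R (G (x k) - G (xs + t k *\<^sub>R d))
        + ((1 / t k) *\<^sub>R (G (xs + t k *\<^sub>R d) - G xs) - g1))" for k
    proof -
      have "t k *\<^sub>R v k = (2 / t k) *\<^sub>R (G (x k) - G xs - t k *\<^sub>R g1)"
        using tk0[of k] unfolding v_def so_quot_def xeq[of k, symmetric]
        by (simp add: scaleR_scaleR power2_eq_square g1_def)
      also have "\<dots> = 2 *\<^sub>R ((1 / t k) *\<^sub>R (G (x k) - G (xs + t k *\<^sub>R d))
        + ((1 / t k) *\<^sub>R (G (xs + t k *\<^sub>R d) - G xs) - g1))"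
        using tk0[of k] by (simp add: algebra_simps scaleR_scaleR)
      finally show ?thesis .
    qed
    have a: "(\<lambda>k. (1 / t k) *\<^sub>R (G (x k) - G (xs + t k *\<^sub>R d))) \<longlonglongrightarrow> 0"
    proof (rule Lim_null_comparison[of _ "\<lambda>k. LG * norm (dk k - d)"])
      show "eventually (\<lambda>k. norm ((1 / t k) *\<^sub>R (G (x k) - G (xs + t k *\<^sub>R d))) \<le> LG * norm (dk k - d)) sequentially"
        using ev_ball[OF eG]
      proof eventually_elim
        case (elim k)
        have "dist (G (x k)) (G (xs + t k *\<^sub>R d)) \<le> LG * dist (x k) (xs + t k *\<^sub>R d)"
          using LG elim unfolding lipschitz_on_def by blast
        then have "norm (G (x k) - G (xs + t k *\<^sub>R d)) \<le> LG * (t k * norm (dk k - d))"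
          using dist_xd[of k] by (simp add: dist_norm)
        then have "(1 / t k) * norm (G (x k) - G (xs + t k *\<^sub>R d)) \<le> (1 / t k) * (LG * (t k * norm (dk k - d)))"
          using tpos[of k] by (intro mult_left_mono) auto
        then show ?case using tpos[of k] by simp
      qed
      show "(\<lambda>k. LG * norm (dk k - d)) \<longlonglongrightarrow> 0"
        using tendsto_mult[OF tendsto_const ndlim, of LG] by simp
    qed
    have b: "(\<lambda>k. (1 / t k) *\<^sub>R (G (xs + t k *\<^sub>R d) - G xs) - g1) \<longlonglongrightarrow> 0"
    proof -
      have "dir_differentiable G xs d" using Gsd unfolding so_dir_differentiable_def by blast
      from filterlim_compose[OF dir_tendsto[OF this] tfil]
      have "(\<lambda>k. (1 / t k) *\<^sub>R (G (xs + t k *\<^sub>R d) - G xs)) \<longlonglongrightarrow> g1" by (simp add: g1_def)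
      then show ?thesis by (rule LIM_zero)
    qed
    have "(\<lambda>k. 2 *\<^sub>R ((1 / t k) *\<^sub>R (G (x k) - G (xs + t k *\<^sub>R d))
        + ((1 / t k) *\<^sub>R (G (xs + t k *\<^sub>R d) - G xs) - g1))) \<longlonglongrightarrow> 2 *\<^sub>R (0 + 0)"
      by (intro tendsto_intros a b)
    then show ?thesis unfolding eq by simp
  qed
  have tang: "g1 \<in> tangent_cone K (G xs)"
    unfolding tangent_cone_def
  proof (intro CollectI exI conjI allI)
    show "\<And>k. t k > 0" by (rule tpos)
    show "t \<longlonglongrightarrow> 0" by (rule tlim)
    show "(\<lambda>k. g1 + (1/2) *\<^sub>R (t k *\<^sub>R v k)) \<longlonglongrightarrow> g1"
      using tendsto_add[OF tendsto_const tendsto_scaleR[OF tendsto_const tv], of g1 "1/2"] by simp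
    fix k
    have "G xs + t k *\<^sub>R (g1 + (1/2) *\<^sub>R (t k *\<^sub>R v k)) = G xs + t k *\<^sub>R g1 + ((t k)\<^sup>2 / 2) *\<^sub>R v k"
      by (simp add: algebra_simps scaleR_scaleR power2_eq_square)
    then show "G xs + t k *\<^sub>R (g1 + (1/2) *\<^sub>R (t k *\<^sub>R v k)) \<in> K" using vK[of k] xK[of k] by simp
  qed
  have f1le: "f1 \<le> 0"
  proof -
    have "dir_differentiable f xs d" using fsd unfolding so_dir_differentiable_def by blast
    from filterlim_compose[OF dir_tendsto[OF this] tfil]
    have q: "(\<lambda>k. (1 / t k) * (f (xs + t k *\<^sub>R d) - f xs)) \<longlonglongrightarrow> f1" by (simp add: f1_def)
    have R: "(\<lambda>k. c k * t k + Lf * norm (dk k - d)) \<longlonglongrightarrow> 0 * 0 + Lf * 0"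
      by (intro tendsto_intros clim tlim ndlim)
    have "eventually (\<lambda>k. (1 / t k) * (f (xs + t k *\<^sub>R d) - f xs) \<le> c k * t k + Lf * norm (dk k - d)) sequentially"
      using ev_ball[OF ef]
    proof eventually_elim
      case (elim k)
      have tk: "t k > 0" by (rule tpos)
      have "dist (f (xs + t k *\<^sub>R d)) (f (x k)) \<le> Lf * dist (xs + t k *\<^sub>R d) (x k)"
        using Lf elim unfolding lipschitz_on_def by blast
      then have "f (xs + t k *\<^sub>R d) - f (x k) \<le> Lf * (t k * norm (dk k - d))"
        using dist_xd[of k] by (simp add: dist_commute dist_real_def)
      then have "f (xs + t k *\<^sub>R d) - f xs \<le> c k * (t k)\<^sup>2 + Lf * (t k * norm (dk k - d))"
        using fx[of k] by linarith
      then have "(1 / t k) * (f (xs + t k *\<^sub>R d) - f xs) \<le> (1 / t k) * (c k * (t k)\<^sup>2 + Lf * (t k * norm (dk k - d)))"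
        using tk by (intro mult_left_mono) auto
      also have "\<dots> = c k * t k + Lf * norm (dk k - d)" using tk by (simp add: field_simps power2_eq_square)
      finally show ?case .
    qed
    then show ?thesis using tendsto_le[OF trivial_limit_sequentially R q] by simp
  qed
  have f10: "f1 = 0" using f1le fo tang unfolding f1_def g1_def by force
  have dcrit: "d \<in> critical_cone f G K xs - {0}"
    using tang f1le dn unfolding critical_cone_def g1_def f1_def by auto
  obtain c0 where c0: "c0 > 0" "\<And>u. g2 u \<in> T2 \<Longrightarrow> c0 \<le> f2 u"
  proof -
    have "0 < (INF u\<in>{u. g2 u \<in> T2}. ereal (f2 u))"
      using so dcrit unfolding g2_def T2_def g1_def f2_def by blast
    then obtain z where z: "0 < ereal z" "ereal z < (INF u\<in>{u. g2 u \<in> T2}. ereal (f2 u))"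
      using ereal_dense2 by blast
    have "z \<le> f2 u" if "g2 u \<in> T2" for u
    proof -
      have "ereal z < ereal (f2 u)" using z(2) that by (meson INF_lower less_le_trans mem_Collect_eq)
      then show ?thesis by simp
    qed
    then show ?thesis using that z(1) by auto
  qed
  have "outer_so_regular K (G xs) g1" using osr tang unfolding g1_def by blast
  then have T2ne: "T2 \<noteq> {}" and idlim: "(\<lambda>k. infdist (v k) T2) \<longlonglongrightarrow> 0"
  proof -
    have inK: "\<forall>k. G xs + t k *\<^sub>R g1 + ((t k)\<^sup>2 / 2) *\<^sub>R v k \<in> K" using vK xK by simp
    have "(\<forall>k. t k > 0) \<and> t \<longlonglongrightarrow> 0 \<and> (\<lambda>k. t k *\<^sub>R v k) \<longlonglongrightarrow> 0 \<and>
             (\<forall>k. G xs + t k *\<^sub>R g1 + ((t k)\<^sup>2 / 2) *\<^sub>R v k \<in> K)"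
      using tpos tlim tv inK by blast
    then have "T2 \<noteq> {} \<and> (\<lambda>k. infdist (v k) T2) \<longlonglongrightarrow> 0"
      using \<open>outer_so_regular K (G xs) g1\<close> unfolding outer_so_regular_def T2_def by blast
    then show "T2 \<noteq> {}" "(\<lambda>k. infdist (v k) T2) \<longlonglongrightarrow> 0" by auto
  qed
  define ep where "ep k = inverse (real (Suc k))" for k
  have ep0: "ep k > 0" for k by (simp add: ep_def)
  have eplim: "ep \<longlonglongrightarrow> 0" unfolding ep_def by (rule LIMSEQ_inverse_real_of_nat)
  have "\<forall>k. \<exists>u\<in>T2. dist (v k) u < infdist (v k) T2 + ep k"
    using infdist_approx[OF T2ne ep0] by blast
  then obtain u where u: "\<And>k. u k \<in> T2" "\<And>k. dist (v k) (u k) < infdist (v k) T2 + ep k"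
    by metis
  have "\<forall>k. \<exists>w'. g2 w' \<in> T2 \<and> norm (w' - w k) \<le> \<kappa> * norm (g2 (w k) - u k) + ep k"
    using mscq_step[OF Greg Gxs U kap ms _ ep0] u(1) unfolding T2_def g1_def g2_def by blast
  then obtain wh where wh: "\<And>k. g2 (wh k) \<in> T2" "\<And>k. norm (wh k - w k) \<le> \<kappa> * norm (g2 (w k) - u k) + ep k"
    by metis
  obtain e where e: "e \<longlonglongrightarrow> 0" "\<And>k. so_quot f xs d (w k) (t k) \<ge> f2 (w k) + e k"
    using seq_epi[OF freg tinj tpos tlim tw, of d] unfolding f2_def by blast
  define R where "R k = 2 * c k - e k + Lf2 * (\<kappa> * (norm (v k - g2 (w k)) + infdist (v k) T2 + ep k) + ep k)" for k
  have Rlim: "R \<longlonglongrightarrow> 2 * 0 - 0 + Lf2 * (\<kappa> * (0 + 0 + 0) + 0)"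
    unfolding R_def
    by (intro tendsto_intros clim e(1) idlim eplim) (use vA in \<open>simp add: tendsto_norm_zero_iff\<close>)
  have "c0 \<le> R k" for k
  proof -
    have sq: "so_quot f xs d (w k) (t k) < 2 * c k"
    proof -
      have "so_quot f xs d (w k) (t k) = (2 / (t k)\<^sup>2) * (f (x k) - f xs)"
        unfolding so_quot_def xeq[of k, symmetric] using f10 by (simp add: f1_def)
      also have "\<dots> < (2 / (t k)\<^sup>2) * (c k * (t k)\<^sup>2)"
        using fx[of k] tpos[of k] by (intro mult_strict_left_mono) auto
      also have "\<dots> = 2 * c k" using tk0[of k] by simp
      finally show ?thesis .
    qed
    have "c0 \<le> f2 (wh k)" by (rule c0(2)[OF wh(1)])
    also have "\<dots> \<le> f2 (w k) + Lf2 * norm (wh k - w k)"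
      using abs_le_D1[OF Lf2(2)[rule_format, of "wh k" "w k", unfolded real_norm_def]] by linarith
    also have "Lf2 * norm (wh k - w k) \<le> Lf2 * (\<kappa> * (norm (v k - g2 (w k)) + infdist (v k) T2 + ep k) + ep k)"
    proof -
      have "norm (g2 (w k) - u k) \<le> norm (v k - g2 (w k)) + dist (v k) (u k)"
        using norm_triangle_ineq[of "g2 (w k) - v k" "v k - u k"]
        by (simp add: dist_norm norm_minus_commute)
      then have "norm (g2 (w k) - u k) \<le> norm (v k - g2 (w k)) + infdist (v k) T2 + ep k"
        using u(2)[of k] by linarith
      then have "norm (wh k - w k) \<le> \<kappa> * (norm (v k - g2 (w k)) + infdist (v k) T2 + ep k) + ep k"
        using wh(2)[of k] kap mult_left_mono[of _ _ \<kappa>] by (smt (verit))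
      then show ?thesis using Lf2(1) by (intro mult_left_mono) auto
    qed
    finally have "c0 \<le> f2 (w k) + Lf2 * (\<kappa> * (norm (v k - g2 (w k)) + infdist (v k) T2 + ep k) + ep k)"
      by simp
    then show ?thesis using e(2)[of k] sq unfolding R_def by linarith
  qed
  then have "c0 \<le> 2 * 0 - 0 + Lf2 * (\<kappa> * (0 + 0 + 0) + 0)"
    using LIMSEQ_le_const[OF Rlim] by blast
  then show False using c0(1) by simp
qed


theorem corollary3p1:
  fixes f :: "'n::euclidean_space \<Rightarrow> real"
    and G :: "'n \<Rightarrow> 'm::euclidean_space"
    and K :: "'m set" and xs :: 'n
  assumes "closed K"
    and "G xs \<in> K"
    and "so_epi_regular f xs"
    and "so_gph_regular G xs"
    and "MSCQ G K xs"
    and "\<forall>d. dir_deriv G xs d \<in> tangent_cone K (G xs) \<longrightarrow>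
             outer_so_regular K (G xs) (dir_deriv G xs d)"
    and "\<forall>d. dir_deriv G xs d \<in> tangent_cone K (G xs) \<longrightarrow> dir_deriv f xs d \<ge> 0"
    and "\<forall>d\<in>critical_cone f G K xs - {0}.
           (INF w\<in>{w. so_dir_deriv G xs d w \<in> so_tangent_set K (G xs) (dir_deriv G xs d)}.
              ereal (so_dir_deriv f xs d w)) > 0"
  shows "\<exists>c>0. \<exists>N. open N \<and> xs \<in> N \<and>
           (\<forall>x\<in>{x. G x \<in> K} \<inter> N. f x \<ge> f xs + c * (norm (x - xs))\<^sup>2)"
proof (rule ccontr)
  assume neg: "\<not> ?thesis"
  have "\<forall>k. \<exists>x. G x \<in> K \<and> x \<in> ball xs (inverse (real (Suc k))) \<and>
          f x < f xs + inverse (real (Suc k)) * (norm (x - xs))\<^sup>2"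
  proof
    fix k
    define e where "e = inverse (real (Suc k))"
    have e0: "e > 0" by (simp add: e_def)
    show "\<exists>x. G x \<in> K \<and> x \<in> ball xs (inverse (real (Suc k))) \<and>
          f x < f xs + inverse (real (Suc k)) * (norm (x - xs))\<^sup>2"
    proof (rule ccontr)
      assume "\<not> ?thesis"
      then have "\<forall>x\<in>{x. G x \<in> K} \<inter> ball xs e. f x \<ge> f xs + e * (norm (x - xs))\<^sup>2"
        unfolding e_def by (auto simp: not_less)
      then have "\<exists>c>0. \<exists>N. open N \<and> xs \<in> N \<and>
           (\<forall>x\<in>{x. G x \<in> K} \<inter> N. f x \<ge> f xs + c * (norm (x - xs))\<^sup>2)"
        using e0 by (intro exI[of _ e] conjI exI[of _ "ball xs e"]) auto
      then show False using neg by blast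
    qed
  qed
  then obtain x0 where x0: "\<And>k. G (x0 k) \<in> K" "\<And>k. x0 k \<in> ball xs (inverse (real (Suc k)))"
    "\<And>k. f (x0 k) < f xs + inverse (real (Suc k)) * (norm (x0 k - xs))\<^sup>2"
    by metis
  define t0 where "t0 k = norm (x0 k - xs)" for k
  have t0pos: "t0 k > 0" for k
  proof -
    have "x0 k \<noteq> xs" using x0(3)[of k] by auto
    then show ?thesis by (simp add: t0_def)
  qed
  have t0lim: "t0 \<longlonglongrightarrow> 0"
  proof (rule tendsto_sandwich[of "\<lambda>_. 0" _ _ "\<lambda>k. inverse (real (Suc k))"])
    show "eventually (\<lambda>k. 0 \<le> t0 k) sequentially" by (simp add: t0_def)
    show "eventually (\<lambda>k. t0 k \<le> inverse (real (Suc k))) sequentially"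
      using x0(2) by (intro always_eventually) (auto simp: t0_def dist_norm norm_minus_commute less_imp_le)
  qed (simp_all only: LIMSEQ_inverse_real_of_nat tendsto_const)
  obtain \<phi>1 :: "nat \<Rightarrow> nat" where \<phi>1: "strict_mono \<phi>1" "inj (t0 \<circ> \<phi>1)"
    using inj_subseq[of t0] t0pos t0lim by blast
  define dk0 where "dk0 k = (1 / t0 (\<phi>1 k)) *\<^sub>R (x0 (\<phi>1 k) - xs)" for k
  have dk0n: "norm (dk0 k) = 1" for k
    using t0pos[of "\<phi>1 k"] by (simp add: dk0_def t0_def)
  have "bounded (range dk0)" using dk0n by (auto simp: bounded_iff)
  then obtain d \<phi>2 where \<phi>2: "strict_mono \<phi>2" and dlim: "(dk0 \<circ> \<phi>2) \<longlonglongrightarrow> d"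
    using bounded_imp_convergent_subsequence by blast
  have dn: "norm d = 1"
  proof -
    have "(\<lambda>k. norm ((dk0 \<circ> \<phi>2) k)) \<longlonglongrightarrow> norm d" by (intro tendsto_norm dlim)
    moreover have "(\<lambda>k. norm ((dk0 \<circ> \<phi>2) k)) = (\<lambda>_. 1)" using dk0n by auto
    ultimately show ?thesis using LIMSEQ_unique tendsto_const by metis
  qed
  define x where "x k = x0 (\<phi>1 (\<phi>2 k))" for k
  define t where "t k = t0 (\<phi>1 (\<phi>2 k))" for k
  define c where "c k = inverse (real (Suc (\<phi>1 (\<phi>2 k))))" for k
  have sm: "strict_mono (\<phi>1 \<circ> \<phi>2)" using \<phi>1(1) \<phi>2 by (rule strict_mono_o)
  show False
  proof (rule core[OF assms(2-8)])
    show "\<And>k. G (x k) \<in> K" using x0(1) by (simp add: x_def)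
    show "\<And>k. t k = norm (x k - xs)" by (simp add: t_def x_def t0_def)
    show "\<And>k. t k > 0" using t0pos by (simp add: t_def)
    show "inj t"
    proof -
      have "inj \<phi>2" using \<phi>2 by (rule strict_mono_imp_inj_on)
      then show ?thesis using \<phi>1(2) unfolding inj_def t_def by auto
    qed
    show "t \<longlonglongrightarrow> 0"
      using LIMSEQ_subseq_LIMSEQ[OF t0lim sm] by (simp add: t_def[abs_def] comp_def)
    show "c \<longlonglongrightarrow> 0"
      using LIMSEQ_subseq_LIMSEQ[OF LIMSEQ_inverse_real_of_nat sm] by (simp add: c_def[abs_def] comp_def)
    show "(\<lambda>k. (1 / t k) *\<^sub>R (x k - xs)) \<longlonglongrightarrow> d"
      using dlim by (simp add: dk0_def t_def x_def comp_def)
    show "norm d = 1" by (rule dn)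
    show "\<And>k. f (x k) < f xs + c k * (t k)\<^sup>2"
      using x0(3) by (simp add: x_def c_def t_def t0_def)
  qed
qed

end
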